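(* Let $A$ be a semiprime $2$-torsion free associative algebra and let $Q$ be a subalgebra of $Q_s(A)$ containing $A$. Then $[Q^{(-)},Q^{(-)}]/Z([Q^{(-)},Q^{(-)}])$ is a Lie algebra of quotients of $[A^{(-)},A^{(-)}]/Z([A^{(-)},A^{(-)}])$ (the latter being naturally a Lie subalgebra of the former).
   Context: Algebras are over a commutative unital ring $\Phi$. For an associative algebra $A$, $A^{(-)}$ is the Lie algebra on $A$ with $[x,y]=xy-yx$; $[A^{(-)},A^{(-)}]$ is the $\Phi$-span of all $[x,y]$, a Lie subalgebra, and $Z(\cdot)$ denotes the center of a Lie algebra. $A$ is $2$-torsion free if $2x=0\Rightarrow x=0$. $Q_s(A)$ is the Martindale symmetric algebra of quotients of the semiprime algebra $A$: the elements $q$ of the maximal left quotient algebra $Q^l_{\max}(A)$ for which some essential ideal $I$ of $A$ satisfies $Iq+qI\subseteq A$. For a Lie subalgebra $L\subseteq Q$, $Q$ is an algebra of quotients of $L$ if for every nonzero $q\in Q$ there is an ideal $I$ of $L$ with $\mathrm{Ann}_L(I)=\{a\in L:[a,I]=0\}=0$ and $0\ne[I,q]\subseteq L$. *)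

theory Defs
  imports Main
begin

definition phi_algebra :: "('r::comm_ring_1 \<Rightarrow> 'q::ring \<Rightarrow> 'q) \<Rightarrow> bool" where
  "phi_algebra sm \<longleftrightarrow>
     (\<forall>a b x. sm (a * b) x = sm a (sm b x)) \<and>
     (\<forall>x. sm 1 x = x) \<and>
     (\<forall>a b x. sm (a + b) x = sm a x + sm b x) \<and>
     (\<forall>a x y. sm a (x + y) = sm a x + sm a y) \<and>
     (\<forall>a x y. sm a (x * y) = sm a x * y) \<and>
     (\<forall>a x y. sm a (x * y) = x * sm a y)"

definition submodule :: "('r::comm_ring_1 \<Rightarrow> 'q::ring \<Rightarrow> 'q) \<Rightarrow> 'q set \<Rightarrow> bool" where
  "submodule sm V \<longleftrightarrow> 0 \<in> V \<and> (\<forall>x\<in>V. \<forall>y\<in>V. x + y \<in> V) \<and> (\<forall>a. \<forall>x\<in>V. sm a x \<in> V)"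

definition subalgebra :: "('r::comm_ring_1 \<Rightarrow> 'q::ring \<Rightarrow> 'q) \<Rightarrow> 'q set \<Rightarrow> bool" where
  "subalgebra sm S \<longleftrightarrow> submodule sm S \<and> (\<forall>x\<in>S. \<forall>y\<in>S. x * y \<in> S)"

definition alg_ideal :: "('r::comm_ring_1 \<Rightarrow> 'q::ring \<Rightarrow> 'q) \<Rightarrow> 'q set \<Rightarrow> 'q set \<Rightarrow> bool" where
  "alg_ideal sm A I \<longleftrightarrow> I \<subseteq> A \<and> submodule sm I \<and>
     (\<forall>a\<in>A. \<forall>x\<in>I. a * x \<in> I \<and> x * a \<in> I)"

definition left_ideal :: "('r::comm_ring_1 \<Rightarrow> 'q::ring \<Rightarrow> 'q) \<Rightarrow> 'q set \<Rightarrow> 'q set \<Rightarrow> bool" where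
  "left_ideal sm A L \<longleftrightarrow> L \<subseteq> A \<and> submodule sm L \<and> (\<forall>a\<in>A. \<forall>x\<in>L. a * x \<in> L)"

definition semiprime :: "('r::comm_ring_1 \<Rightarrow> 'q::ring \<Rightarrow> 'q) \<Rightarrow> 'q set \<Rightarrow> bool" where
  "semiprime sm A \<longleftrightarrow> (\<forall>I. alg_ideal sm A I \<and> (\<forall>x\<in>I. \<forall>y\<in>I. x * y = 0) \<longrightarrow> I = {0})"

definition two_torsion_free :: "'q::ring set \<Rightarrow> bool" where
  "two_torsion_free A \<longleftrightarrow> (\<forall>x\<in>A. x + x = 0 \<longrightarrow> x = 0)"

definition essential_ideal :: "('r::comm_ring_1 \<Rightarrow> 'q::ring \<Rightarrow> 'q) \<Rightarrow> 'q set \<Rightarrow> 'q set \<Rightarrow> bool" where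
  "essential_ideal sm A I \<longleftrightarrow> alg_ideal sm A I \<and>
     (\<forall>J. alg_ideal sm A J \<and> I \<inter> J = {0} \<longrightarrow> J = {0})"

text \<open>Dense left ideal (density taken in the unitization Phi x A).\<close>
definition dense_left_ideal :: "('r::comm_ring_1 \<Rightarrow> 'q::ring \<Rightarrow> 'q) \<Rightarrow> 'q set \<Rightarrow> 'q set \<Rightarrow> bool" where
  "dense_left_ideal sm A L \<longleftrightarrow> left_ideal sm A L \<and>
     (\<forall>r1\<in>A. \<forall>r2\<in>A. r1 \<noteq> 0 \<longrightarrow>
        (\<exists>c. \<exists>r\<in>A. sm c r1 + r * r1 \<noteq> 0 \<and> sm c r2 + r * r2 \<in> L))"

text \<open>Qmax is (a copy of) the maximal left quotient algebra of A, given by its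
  standard characterising properties (Utumi).\<close>
definition is_left_max_quotient ::
  "('r::comm_ring_1 \<Rightarrow> 'q::ring \<Rightarrow> 'q) \<Rightarrow> 'q set \<Rightarrow> 'q set \<Rightarrow> bool" where
  "is_left_max_quotient sm A Qmax \<longleftrightarrow>
     subalgebra sm Qmax \<and> A \<subseteq> Qmax \<and>
     (\<forall>q\<in>Qmax. \<exists>L. dense_left_ideal sm A L \<and> (\<forall>x\<in>L. x * q \<in> A)) \<and>
     (\<forall>q\<in>Qmax. \<forall>L. q \<noteq> 0 \<and> dense_left_ideal sm A L \<longrightarrow> (\<exists>x\<in>L. x * q \<noteq> 0)) \<and>
     (\<forall>L f. dense_left_ideal sm A L \<and> (\<forall>x\<in>L. f x \<in> A) \<and>
        (\<forall>x\<in>L. \<forall>y\<in>L. f (x + y) = f x + f y) \<and>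
        (\<forall>c. \<forall>x\<in>L. f (sm c x) = sm c (f x)) \<and>
        (\<forall>a\<in>A. \<forall>x\<in>L. f (a * x) = a * f x)
        \<longrightarrow> (\<exists>q\<in>Qmax. \<forall>x\<in>L. f x = x * q))"

definition Qs :: "('r::comm_ring_1 \<Rightarrow> 'q::ring \<Rightarrow> 'q) \<Rightarrow> 'q set \<Rightarrow> 'q set \<Rightarrow> 'q set" where
  "Qs sm A Qmax = {q \<in> Qmax. \<exists>I. essential_ideal sm A I \<and> (\<forall>x\<in>I. x * q \<in> A \<and> q * x \<in> A)}"

definition bracket :: "'q::ring \<Rightarrow> 'q \<Rightarrow> 'q" where
  "bracket x y = x * y - y * x"

definition phi_span :: "('r::comm_ring_1 \<Rightarrow> 'q::ring \<Rightarrow> 'q) \<Rightarrow> 'q set \<Rightarrow> 'q set" where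
  "phi_span sm G = \<Inter>{V. G \<subseteq> V \<and> submodule sm V}"

definition commutator_space :: "('r::comm_ring_1 \<Rightarrow> 'q::ring \<Rightarrow> 'q) \<Rightarrow> 'q set \<Rightarrow> 'q set" where
  "commutator_space sm S = phi_span sm {bracket x y | x y. x \<in> S \<and> y \<in> S}"

definition lie_center :: "'q::ring set \<Rightarrow> 'q set" where
  "lie_center L = {z \<in> L. \<forall>x\<in>L. bracket z x = 0}"

text \<open>Quotient Lie algebras are handled through representatives: for Lie subalgebras
  LA \<subseteq> LQ with centres ZA, ZQ and ZA = LA \<inter> ZQ, LA/ZA embeds into LQ/ZQ via
  x + ZA \<mapsto> x + ZQ. An ideal of LA/ZA corresponds to a Lie ideal I of LA containing ZA.
  LQ/ZQ is an algebra of quotients of LA/ZA iff for every q in LQ \<setminus> ZQ there is such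
  an I with zero annihilator in LA/ZA and 0 \<noteq> [I/ZA, q + ZQ] \<subseteq> (LA + ZQ)/ZQ.\<close>
definition lie_quotient_algebra_of_quotients ::
  "('r::comm_ring_1 \<Rightarrow> 'q::ring \<Rightarrow> 'q) \<Rightarrow> 'q set \<Rightarrow> 'q set \<Rightarrow> 'q set \<Rightarrow> 'q set \<Rightarrow> bool" where
  "lie_quotient_algebra_of_quotients sm LA ZA LQ ZQ \<longleftrightarrow>
     (\<forall>q\<in>LQ. q \<notin> ZQ \<longrightarrow>
        (\<exists>I. submodule sm I \<and> ZA \<subseteq> I \<and> I \<subseteq> LA \<and>
             (\<forall>a\<in>LA. \<forall>x\<in>I. bracket a x \<in> I) \<and>
             (\<forall>a\<in>LA. (\<forall>x\<in>I. bracket a x \<in> ZA) \<longrightarrow> a \<in> ZA) \<and>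
             (\<forall>x\<in>I. \<exists>a\<in>LA. \<exists>z\<in>ZQ. bracket x q = a + z) \<and>
             (\<exists>x\<in>I. bracket x q \<notin> ZQ)))"

end

theory Submission
  imports Defs
begin

lemma phi_add: "phi_algebra sm \<Longrightarrow> sm c (x + y) = sm c x + sm c y"
  unfolding phi_algebra_def by blast
lemma phi_addc: "phi_algebra sm \<Longrightarrow> sm (a + b) x = sm a x + sm b x"
  unfolding phi_algebra_def by blast
lemma phi_one: "phi_algebra sm \<Longrightarrow> sm 1 x = x"
  unfolding phi_algebra_def by blast
lemma phi_mr: "phi_algebra sm \<Longrightarrow> sm c (x * y) = x * sm c y"
  unfolding phi_algebra_def by blast
lemma phi_ml: "phi_algebra sm \<Longrightarrow> sm c (x * y) = sm c x * y"
  unfolding phi_algebra_def by blast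

lemma phi_sm0: "phi_algebra sm \<Longrightarrow> sm c 0 = 0"
proof -
  assume p: "phi_algebra sm"
  have "sm c (0+0) = sm c 0 + sm c 0" using phi_add[OF p] by blast
  thus ?thesis by simp
qed

lemma phi_0sm: "phi_algebra sm \<Longrightarrow> sm 0 x = 0"
proof -
  assume p: "phi_algebra sm"
  have "sm (0+0) x = sm 0 x + sm 0 x" using phi_addc[OF p] by blast
  thus ?thesis by simp
qed

lemma phi_neg1: "phi_algebra sm \<Longrightarrow> sm (-1) x = - x"
proof -
  assume p: "phi_algebra sm"
  have "sm (1 + -1) x = sm 1 x + sm (-1) x" using phi_addc[OF p] by blast
  hence "0 = x + sm (-1) x" using phi_0sm[OF p] phi_one[OF p] by simp
  thus ?thesis by (metis add_eq_0_iff)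
qed

lemma phi_diff: "phi_algebra sm \<Longrightarrow> sm c (x - y) = sm c x - sm c y"
proof -
  assume p: "phi_algebra sm"
  have "sm c (x - y) + sm c y = sm c x" using phi_add[OF p, of c "x - y" y] by simp
  thus ?thesis by (simp add: eq_diff_eq)
qed

lemma bracket_sm_l: "phi_algebra sm \<Longrightarrow> bracket (sm c u) x = sm c (bracket u x)"
  unfolding bracket_def by (simp add: phi_diff phi_ml[symmetric] phi_mr[symmetric])
lemma bracket_sm_r: "phi_algebra sm \<Longrightarrow> bracket x (sm c u) = sm c (bracket x u)"
  unfolding bracket_def by (simp add: phi_diff phi_ml[symmetric] phi_mr[symmetric])
lemma bracket_add_l: "bracket (u + v) x = bracket u x + bracket v x"
  by (simp add: bracket_def algebra_simps)
lemma bracket_add_r: "bracket x (u + v) = bracket x u + bracket x v"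
  by (simp add: bracket_def algebra_simps)
lemma bracket_0[simp]: "bracket 0 x = 0" "bracket x 0 = 0"
  by (simp_all add: bracket_def)
lemma bracket_anti: "bracket x y = - bracket y x"
  by (simp add: bracket_def)

lemma sub_0: "submodule sm V \<Longrightarrow> 0 \<in> V" by (simp add: submodule_def)
lemma sub_add: "submodule sm V \<Longrightarrow> x \<in> V \<Longrightarrow> y \<in> V \<Longrightarrow> x + y \<in> V" by (simp add: submodule_def)
lemma sub_sm: "submodule sm V \<Longrightarrow> x \<in> V \<Longrightarrow> sm c x \<in> V" by (simp add: submodule_def)
lemma sub_neg: "phi_algebra sm \<Longrightarrow> submodule sm V \<Longrightarrow> x \<in> V \<Longrightarrow> - x \<in> V"
  using sub_sm[of sm V x "-1"] phi_neg1[of sm x] by simp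
lemma sub_diff: "phi_algebra sm \<Longrightarrow> submodule sm V \<Longrightarrow> x \<in> V \<Longrightarrow> y \<in> V \<Longrightarrow> x - y \<in> V"
  using sub_add[of sm V x "-y"] sub_neg[of sm V y] by simp

lemma span_sub: "submodule sm (phi_span sm G)"
  unfolding phi_span_def submodule_def by auto
lemma span_gen: "G \<subseteq> phi_span sm G"
  unfolding phi_span_def by auto
lemma span_least: "G \<subseteq> V \<Longrightarrow> submodule sm V \<Longrightarrow> phi_span sm G \<subseteq> V"
  unfolding phi_span_def by auto
lemma span_induct:
  assumes "x \<in> phi_span sm G" "P 0" "\<And>g. g \<in> G \<Longrightarrow> P g"
    "\<And>u v. P u \<Longrightarrow> P v \<Longrightarrow> P (u + v)" "\<And>c u. P u \<Longrightarrow> P (sm c u)"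
  shows "P x"
proof -
  have "phi_span sm G \<subseteq> {x. P x}"
    by (rule span_least) (auto simp: submodule_def assms)
  thus ?thesis using assms(1) by auto
qed

definition cen :: "'q::ring set \<Rightarrow> 'q set" where
  "cen A = {z \<in> A. \<forall>b\<in>A. z * b = b * z}"

lemma ess_ideal: "essential_ideal sm A J \<Longrightarrow> alg_ideal sm A J"
  by (simp add: essential_ideal_def)

locale sp =
  fixes sm :: "'r::comm_ring_1 \<Rightarrow> 'q::ring \<Rightarrow> 'q" and A :: "'q set"
  assumes phi: "phi_algebra sm" and subA: "subalgebra sm A" and semi: "semiprime sm A"
begin

lemma A_sub: "submodule sm A" using subA by (simp add: subalgebra_def)
lemma A_0: "0 \<in> A" using A_sub sub_0 by blast
lemma A_add: "x \<in> A \<Longrightarrow> y \<in> A \<Longrightarrow> x + y \<in> A" using A_sub sub_add by blast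
lemma A_mul: "x \<in> A \<Longrightarrow> y \<in> A \<Longrightarrow> x * y \<in> A" using subA by (simp add: subalgebra_def)
lemma A_neg: "x \<in> A \<Longrightarrow> - x \<in> A" using A_sub sub_neg phi by blast
lemma A_diff: "x \<in> A \<Longrightarrow> y \<in> A \<Longrightarrow> x - y \<in> A" using A_sub sub_diff phi by blast
lemma A_br: "x \<in> A \<Longrightarrow> y \<in> A \<Longrightarrow> bracket x y \<in> A" by (simp add: bracket_def A_diff A_mul)

lemma ideal_inter: "alg_ideal sm A I \<Longrightarrow> alg_ideal sm A K \<Longrightarrow> alg_ideal sm A (I \<inter> K)"
  by (auto simp: alg_ideal_def submodule_def)

lemma S1:
  assumes "alg_ideal sm A I" "alg_ideal sm A K" "\<forall>x\<in>I. \<forall>y\<in>K. x * y = 0"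
  shows "I \<inter> K = {0}"
proof -
  have "alg_ideal sm A (I \<inter> K)" using assms ideal_inter by blast
  moreover have "\<forall>x\<in>I \<inter> K. \<forall>y\<in>I \<inter> K. x * y = 0" using assms(3) by blast
  ultimately show ?thesis using semi unfolding semiprime_def by blast
qed

lemma rann_ideal:
  assumes "alg_ideal sm A J"
  shows "alg_ideal sm A {x\<in>A. \<forall>j\<in>J. j * x = 0}"
  using assms unfolding alg_ideal_def submodule_def
  by (auto simp: A_0 A_add A_mul phi_mr[OF phi, symmetric] phi_sm0[OF phi] distrib_left
      mult.assoc[symmetric] A_sub sub_sm)

end

context sp
begin

lemma lann_ideal:
  assumes "alg_ideal sm A J"
  shows "alg_ideal sm A {x\<in>A. \<forall>j\<in>J. x * j = 0}"
  using assms unfolding alg_ideal_def submodule_def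
  by (auto simp: A_0 A_add A_mul phi_ml[OF phi, symmetric] phi_sm0[OF phi] distrib_right
      mult.assoc A_sub sub_sm)

lemma E_left:
  assumes ess: "essential_ideal sm A J" and b: "b \<in> A" and z: "\<forall>j\<in>J. j * b = 0"
  shows "b = 0"
proof -
  let ?R = "{x\<in>A. \<forall>j\<in>J. j * x = 0}"
  have JI: "alg_ideal sm A J" using ess ess_ideal by blast
  have RI: "alg_ideal sm A ?R" using rann_ideal[OF JI] .
  have "J \<inter> ?R = {0}" by (rule S1[OF JI RI]) auto
  hence "?R = {0}" using ess RI unfolding essential_ideal_def by blast
  thus ?thesis using b z by blast
qed

lemma E_right:
  assumes ess: "essential_ideal sm A J" and b: "b \<in> A" and z: "\<forall>j\<in>J. b * j = 0"
  shows "b = 0"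
proof -
  let ?R = "{x\<in>A. \<forall>j\<in>J. x * j = 0}"
  have JI: "alg_ideal sm A J" using ess ess_ideal by blast
  have RI: "alg_ideal sm A ?R" using lann_ideal[OF JI] .
  have "?R \<inter> J = {0}" by (rule S1[OF RI JI]) auto
  hence "?R = {0}" using ess RI unfolding essential_ideal_def by blast
  thus ?thesis using b z by blast
qed

lemma A_ideal: "alg_ideal sm A A"
  unfolding alg_ideal_def using A_sub A_mul by blast

lemma A_ess: "essential_ideal sm A A"
  unfolding essential_ideal_def using A_ideal alg_ideal_def by blast

lemma L1:
  assumes m: "m \<in> A" and z: "\<forall>b\<in>A. m * b * m = 0"
  shows "m = 0"
proof -
  let ?R = "{x\<in>A. m * x = 0 \<and> (\<forall>b\<in>A. m * b * x = 0)}"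
  have RI: "alg_ideal sm A ?R"
    unfolding alg_ideal_def submodule_def
  proof (intro conjI ballI allI)
    show "?R \<subseteq> A" by blast
    show "0 \<in> ?R" using A_0 by simp
  next
    fix x y assume "x \<in> ?R" "y \<in> ?R" thus "x + y \<in> ?R" by (simp add: A_add distrib_left)
  next
    fix c x assume "x \<in> ?R" thus "sm c x \<in> ?R"
      using A_sub sub_sm by (auto simp: phi_mr[OF phi, symmetric] phi_sm0[OF phi])
  next
    fix a x assume a: "a \<in> A" and x: "x \<in> ?R"
    have "m * (a * x) = (m * a) * x" by (simp add: mult.assoc)
    moreover have "\<forall>b\<in>A. m * b * (a * x) = m * (b * a) * x" by (simp add: mult.assoc)
    ultimately show "a * x \<in> ?R" using a x A_mul by auto
  next
    fix a x assume a: "a \<in> A" and x: "x \<in> ?R"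
    have "m * (x * a) = (m * x) * a" by (simp add: mult.assoc)
    moreover have "\<forall>b\<in>A. m * b * (x * a) = (m * b * x) * a" by (simp add: mult.assoc)
    ultimately show "x * a \<in> ?R" using a x A_mul by auto
  qed
  let ?L = "{x\<in>A. \<forall>r\<in>?R. x * r = 0}"
  have LI: "alg_ideal sm A ?L"
    unfolding alg_ideal_def submodule_def
  proof (intro conjI ballI allI)
    show "?L \<subseteq> A" by blast
    show "0 \<in> ?L" using A_0 by simp
  next
    fix x y assume "x \<in> ?L" "y \<in> ?L" thus "x + y \<in> ?L" by (simp add: A_add distrib_right)
  next
    fix c x assume "x \<in> ?L" thus "sm c x \<in> ?L"
      using A_sub sub_sm by (auto simp: phi_ml[OF phi, symmetric] phi_sm0[OF phi])
  next
    fix a x assume a: "a \<in> A" and x: "x \<in> ?L"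
    show "a * x \<in> ?L" using a x A_mul by (auto simp: mult.assoc)
  next
    fix a x assume a: "a \<in> A" and x: "x \<in> ?L"
    have "\<forall>r\<in>?R. a * r \<in> ?R" using RI a unfolding alg_ideal_def by blast
    thus "x * a \<in> ?L" using a x A_mul by (auto simp: mult.assoc)
  qed
  have LR: "?L \<inter> ?R = {0}" by (rule S1[OF LI RI]) auto
  have bm: "b * m = 0" if b: "b \<in> A" for b
  proof -
    have "m * (b * m) = 0" using b z by (simp add: mult.assoc[symmetric])
    moreover have "\<forall>c\<in>A. m * c * (b * m) = 0"
    proof
      fix c assume c: "c \<in> A"
      have "m * c * (b * m) = m * (c * b) * m" by (simp add: mult.assoc)
      thus "m * c * (b * m) = 0" using z c b A_mul by simp
    qed
    ultimately have "b * m \<in> ?R" using b m A_mul by blast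
    moreover have "b * m \<in> ?L" using b m A_mul by (auto simp: mult.assoc)
    ultimately show ?thesis using LR by blast
  qed
  have "m \<in> ?R" using m z bm by auto
  moreover have "m \<in> ?L" using m by auto
  ultimately show ?thesis using LR by blast
qed

lemma L1J:
  assumes JI: "alg_ideal sm A J" and d: "d \<in> J" and z: "\<forall>u\<in>J. d * u * d = 0"
  shows "d = 0"
proof -
  have JA: "J \<subseteq> A" using JI alg_ideal_def by blast
  have Jl: "\<And>b u. b \<in> A \<Longrightarrow> u \<in> J \<Longrightarrow> b * u \<in> J" using JI alg_ideal_def by blast
  have Jr: "\<And>b u. b \<in> A \<Longrightarrow> u \<in> J \<Longrightarrow> u * b \<in> J" using JI alg_ideal_def by blast
  have dA: "d \<in> A" using d JA by blast
  have "d * b * d = 0" if b: "b \<in> A" for b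
  proof (rule L1)
    show "d * b * d \<in> A" using dA b A_mul by blast
    show "\<forall>a\<in>A. d * b * d * a * (d * b * d) = 0"
    proof
      fix a assume a: "a \<in> A"
      have "b * d * a * d * b \<in> J" using Jl Jr a b d dA by blast
      hence "d * (b * d * a * d * b) * d = 0" using z by blast
      thus "d * b * d * a * (d * b * d) = 0" by (simp add: mult.assoc)
    qed
  qed
  thus ?thesis using L1 dA by blast
qed

lemma cenA: "z \<in> cen A \<Longrightarrow> z \<in> A" by (simp add: cen_def)
lemma cenC: "z \<in> cen A \<Longrightarrow> b \<in> A \<Longrightarrow> z * b = b * z" by (simp add: cen_def)

end

lemma id_der: "bracket (a::'a::ring) (x * y) = bracket a x * y + x * bracket a y"
  by (simp add: bracket_def algebra_simps)
lemma id_der2: "bracket (w::'a::ring) (bracket w (t * s)) = bracket w (bracket w t) * s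
   + bracket w t * bracket w s + bracket w t * bracket w s + t * bracket w (bracket w s)"
  by (simp add: bracket_def algebra_simps)
lemma id_jac: "bracket (bracket (x::'a::ring) y) q = bracket x (bracket y q) - bracket y (bracket x q)"
  by (simp add: bracket_def algebra_simps)
lemma id_xxy: "bracket (x::'a::ring) (x * y) = x * bracket x y"
  by (simp add: bracket_def algebra_simps)
lemma id_dl: "bracket (b::'a::ring) (bracket x y) = bracket (bracket b x) y + bracket x (bracket b y)"
  by (simp add: bracket_def algebra_simps)

context sp
begin

lemma K1:
  assumes ess: "essential_ideal sm A J" and tt: "two_torsion_free A"
    and aJ: "\<forall>x\<in>J. a * x \<in> A \<and> x * a \<in> A"
    and hyp: "\<forall>x\<in>J. \<forall>y\<in>J. bracket a (bracket x y) \<in> cen A"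
    and x: "x \<in> J" and y: "y \<in> J"
  shows "bracket a (bracket x y) = 0"
proof -
  have JI: "alg_ideal sm A J" using ess ess_ideal by blast
  have JA: "\<And>u. u \<in> J \<Longrightarrow> u \<in> A" using JI alg_ideal_def by blast
  have Jl: "\<And>b u. b \<in> A \<Longrightarrow> u \<in> J \<Longrightarrow> b * u \<in> J" using JI alg_ideal_def by blast
  have Jr: "\<And>b u. b \<in> A \<Longrightarrow> u \<in> J \<Longrightarrow> u * b \<in> J" using JI alg_ideal_def by blast
  have Jsub: "submodule sm J" using JI alg_ideal_def by blast
  have Jbr: "\<And>u v. u \<in> J \<Longrightarrow> v \<in> J \<Longrightarrow> bracket u v \<in> J"
    unfolding bracket_def using Jl JA sub_diff[OF phi Jsub] by blast
  define w where "w = bracket x y"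
  have wJ: "w \<in> J" using Jbr x y w_def by blast
  have wA: "w \<in> A" using JA wJ by blast
  define c where "c = bracket a w"
  have cc: "c \<in> cen A" using hyp x y c_def w_def by blast
  have cA: "c \<in> A" using cc cenA by blast
  have cC: "\<And>b. b \<in> A \<Longrightarrow> c * b = b * c" using cc cenC by blast
  have brA: "\<And>u v. u \<in> A \<Longrightarrow> v \<in> A \<Longrightarrow> bracket u v \<in> A" using A_br by blast
  have i: "c * bracket w (bracket w t) = 0" if t: "t \<in> J" for t
  proof -
    define e where "e = bracket a (bracket w t)"
    have ec: "e \<in> cen A" using hyp wJ t e_def by blast
    have wt: "w * t \<in> J" using Jr t wJ JA by blast
    define X where "X = bracket a (bracket w (w * t))"
    have Xc: "X \<in> cen A" using hyp wJ wt X_def by blast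
    have Xe: "X = c * bracket w t + w * e"
      unfolding X_def c_def e_def id_xxy id_der by simp
    have "w * X = X * w" using Xc wA cenC by metis
    hence "w * (c * bracket w t + w * e) - (c * bracket w t + w * e) * w = 0" using Xe by simp
    hence "(w * c) * bracket w t + w * (w * e) - c * bracket w t * w - w * (e * w) = 0"
      by (simp add: algebra_simps)
    moreover have "w * c = c * w" using cC wA by metis
    moreover have "e * w = w * e" using ec wA cenC by metis
    ultimately have "(c * w) * bracket w t - c * bracket w t * w = 0" by simp
    thus ?thesis by (simp add: bracket_def algebra_simps)
  qed
  have ii: "c * bracket w t * bracket w s = 0" if t: "t \<in> J" and s: "s \<in> J" for t s
  proof -
    have ts: "t * s \<in> J" using Jr t s JA by blast
    have h0: "c * bracket w (bracket w (t * s)) = 0" using i ts by blast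
    have h1: "c * bracket w (bracket w (t * s)) = c * bracket w (bracket w t) * s
        + (c * bracket w t * bracket w s + c * bracket w t * bracket w s)
        + (c * t) * bracket w (bracket w s)"
      by (subst id_der2) (simp only: distrib_left mult.assoc add.assoc)
    have ct: "c * t = t * c" using cC t JA by blast
    have h2: "(c * t) * bracket w (bracket w s) = 0"
      using i[OF s] ct by (simp add: mult.assoc)
    have h3: "c * bracket w (bracket w t) * s = 0" using i[OF t] by simp
    have "c * bracket w t * bracket w s + c * bracket w t * bracket w s = 0"
      using h0 h1 h2 h3 by simp
    moreover have "c * bracket w t * bracket w s \<in> A"
      using cA wA JA[OF t] JA[OF s] by (simp add: A_mul A_br)
    ultimately show ?thesis using tt unfolding two_torsion_free_def by blast
  qed
  have iii: "c * bracket w t * u * bracket w s = 0" if t: "t \<in> J" and u: "u \<in> J" and s: "s \<in> J" for t u s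
  proof -
    have us: "u * s \<in> J" using Jr u s JA by blast
    have "c * bracket w t * bracket w (u * s) = 0" using ii t us by blast
    hence "c * bracket w t * bracket w u * s + c * bracket w t * u * bracket w s = 0"
      unfolding id_der by (simp add: algebra_simps)
    thus ?thesis using ii[OF t u] by simp
  qed
  have iv: "c * bracket w t = 0" if t: "t \<in> J" for t
  proof (rule L1J[OF JI])
    show "c * bracket w t \<in> J" using Jl[OF cA Jbr[OF wJ t]] .
    show "\<forall>u\<in>J. c * bracket w t * u * (c * bracket w t) = 0"
    proof
      fix u assume u: "u \<in> J"
      have m: "c * bracket w t * u \<in> A" using cA wA JA[OF t] JA[OF u] by (simp add: A_mul A_br)
      have "c * bracket w t * u * (c * bracket w t) = ((c * bracket w t * u) * c) * bracket w t"
        by (simp add: mult.assoc)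
      also have "\<dots> = (c * (c * bracket w t * u)) * bracket w t" using cC m by metis
      also have "\<dots> = c * (c * bracket w t * u * bracket w t)" by (simp add: mult.assoc)
      also have "\<dots> = 0" using iii t u by simp
      finally show "c * bracket w t * u * (c * bracket w t) = 0" .
    qed
  qed
  have v: "c * bracket w r = 0" if r: "r \<in> A" for r
  proof (rule E_left[OF ess])
    show "c * bracket w r \<in> A" using cA wA r by (simp add: A_mul A_br)
    show "\<forall>j\<in>J. j * (c * bracket w r) = 0"
    proof
      fix t assume t: "t \<in> J"
      have tr: "t * r \<in> J" using Jr t r by blast
      have "c * bracket w (t * r) = 0" using iv tr by blast
      hence "c * bracket w t * r + (c * t) * bracket w r = 0"
        unfolding id_der by (simp add: algebra_simps)
      moreover have "c * t = t * c" using cC t JA by blast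
      ultimately show "t * (c * bracket w r) = 0" using iv[OF t] by (simp add: mult.assoc)
    qed
  qed
  have vi: "c * c = 0"
  proof (rule E_left[OF ess])
    show "c * c \<in> A" using A_mul cA by simp
    show "\<forall>j\<in>J. j * (c * c) = 0"
    proof
      fix t assume t: "t \<in> J"
      have ta: "t * a \<in> A" using aJ t by blast
      have "c * bracket w (t * a) = 0" using v ta by blast
      hence "c * bracket w t * a + (c * t) * bracket w a = 0"
        unfolding id_der by (simp add: algebra_simps)
      moreover have "c * t = t * c" using cC t JA by blast
      moreover have "bracket w a = - c" unfolding c_def using bracket_anti by metis
      ultimately show "t * (c * c) = 0" using iv[OF t] by (simp add: mult.assoc)
    qed
  qed
  have "c = 0"
  proof (rule L1[OF cA], rule ballI)
    fix b assume b: "b \<in> A"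
    have bc: "b * c = c * b" using cC b by metis
    have "c * b * c = c * (c * b)" by (simp add: mult.assoc bc)
    also have "\<dots> = 0" using vi by (simp add: mult.assoc[symmetric])
    finally show "c * b * c = 0" .
  qed
  thus ?thesis using c_def w_def by simp
qed

end

context sp
begin

lemma K2:
  assumes ess: "essential_ideal sm A J"
    and aJ: "\<forall>x\<in>J. a * x \<in> A \<and> x * a \<in> A"
    and hyp: "\<forall>x\<in>J. \<forall>y\<in>J. bracket a (bracket x y) = 0"
    and x: "x \<in> J"
  shows "bracket a x = 0"
proof -
  have JI: "alg_ideal sm A J" using ess ess_ideal by blast
  have JA: "\<And>u. u \<in> J \<Longrightarrow> u \<in> A" using JI alg_ideal_def by blast
  have Jl: "\<And>b u. b \<in> A \<Longrightarrow> u \<in> J \<Longrightarrow> b * u \<in> J" using JI alg_ideal_def by blast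
  have Jr: "\<And>b u. b \<in> A \<Longrightarrow> u \<in> J \<Longrightarrow> u * b \<in> J" using JI alg_ideal_def by blast
  define d where "d = bracket a x"
  have dA: "d \<in> A" unfolding d_def bracket_def using aJ x A_diff by blast
  have xA: "x \<in> A" using JA x .
  have s1: "d * bracket x y = 0" if y: "y \<in> J" for y
  proof -
    have xy: "x * y \<in> J" using Jr[OF JA[OF y] x] .
    have "bracket a (bracket x (x * y)) = 0" using hyp x xy by blast
    hence "d * bracket x y + x * bracket a (bracket x y) = 0"
      unfolding id_xxy id_der d_def .
    thus ?thesis using hyp x y by simp
  qed
  have s2: "d * y * bracket x u = 0" if y: "y \<in> J" and u: "u \<in> A" for y u
  proof -
    have yu: "y * u \<in> J" using Jr[OF u y] .
    have "d * bracket x (y * u) = 0" using s1 yu by blast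
    hence "d * bracket x y * u + d * y * bracket x u = 0"
      unfolding id_der by (simp add: distrib_left mult.assoc)
    thus ?thesis using s1[OF y] by simp
  qed
  have s3: "d * y * t * d = 0" if y: "y \<in> J" and t: "t \<in> J" for y t
  proof -
    have ta: "t * a \<in> A" using aJ t by blast
    have "d * y * bracket x (t * a) = 0" using s2 y ta by blast
    hence "d * y * bracket x t * a + d * y * t * bracket x a = 0"
      unfolding id_der by (simp add: distrib_left mult.assoc)
    moreover have "d * y * bracket x t * a = 0" using s2[OF y JA[OF t]] by simp
    ultimately have "d * y * t * bracket x a = 0" by simp
    moreover have "bracket x a = - d" unfolding d_def using bracket_anti by metis
    ultimately show ?thesis by simp
  qed
  have s4: "u * d * v = 0" if u: "u \<in> J" and v: "v \<in> J" for u v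
  proof (rule L1)
    show "u * d * v \<in> A" using JA[OF u] JA[OF v] dA by (simp add: A_mul)
    show "\<forall>b\<in>A. u * d * v * b * (u * d * v) = 0"
    proof
      fix b assume b: "b \<in> A"
      have vb: "v * b \<in> J" using Jr[OF b v] .
      have "u * d * v * b * (u * d * v) = u * (d * (v * b) * u * d) * v" by (simp add: mult.assoc)
      thus "u * d * v * b * (u * d * v) = 0" using s3[OF vb u] by simp
    qed
  qed
  have s5: "u * d = 0" if u: "u \<in> J" for u
    using E_right[OF ess, of "u * d"] s4[OF u] JA[OF u] dA by (simp add: A_mul)
  have "d = 0" using E_left[OF ess dA] s5 by blast
  thus ?thesis using d_def by simp
qed

lemma K3:
  assumes ess: "essential_ideal sm A J" and a: "a \<in> A"
    and z: "\<forall>x\<in>J. bracket a x = 0"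
  shows "a \<in> cen A"
proof -
  have JI: "alg_ideal sm A J" using ess ess_ideal by blast
  have JA: "\<And>u. u \<in> J \<Longrightarrow> u \<in> A" using JI alg_ideal_def by blast
  have Jr: "\<And>b u. b \<in> A \<Longrightarrow> u \<in> J \<Longrightarrow> u * b \<in> J" using JI alg_ideal_def by blast
  have "bracket a b = 0" if b: "b \<in> A" for b
  proof (rule E_left[OF ess])
    show "bracket a b \<in> A" using a b A_br by blast
    show "\<forall>j\<in>J. j * bracket a b = 0"
    proof
      fix x assume x: "x \<in> J"
      have "bracket a (x * b) = 0" using z Jr[OF b x] by blast
      thus "x * bracket a b = 0" unfolding id_der using z x by simp
    qed
  qed
  thus ?thesis using a unfolding cen_def bracket_def by simp
qed

lemma H1:
  assumes z: "z \<in> A" and h: "\<forall>x\<in>A. \<forall>y\<in>A. bracket z (bracket x y) = 0"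
  shows "z \<in> cen A"
proof -
  have "\<forall>x\<in>A. bracket z x = 0"
    using K2[OF A_ess _ h] z by (simp add: A_mul)
  thus ?thesis using K3[OF A_ess z] by blast
qed

lemma cen_neg: "z \<in> cen A \<Longrightarrow> - z \<in> cen A"
  unfolding cen_def using A_neg by auto

lemma dense_sub: "dense_left_ideal sm A L \<Longrightarrow> L \<subseteq> A"
  by (simp add: dense_left_ideal_def left_ideal_def)

lemma Qm_sub: "is_left_max_quotient sm A Qmax \<Longrightarrow> subalgebra sm Qmax"
  unfolding is_left_max_quotient_def by (elim conjE)
lemma Qm_A: "is_left_max_quotient sm A Qmax \<Longrightarrow> A \<subseteq> Qmax"
  unfolding is_left_max_quotient_def by (elim conjE)
lemma Qm_1: "is_left_max_quotient sm A Qmax \<Longrightarrow> q \<in> Qmax \<Longrightarrow>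
    \<exists>L. dense_left_ideal sm A L \<and> (\<forall>x\<in>L. x * q \<in> A)"
  unfolding is_left_max_quotient_def by (elim conjE) (rule bspec)
lemma Qm_2: assumes "is_left_max_quotient sm A Qmax" "q \<in> Qmax" "dense_left_ideal sm A L"
    "\<forall>x\<in>L. x * q = 0" shows "q = 0"
proof -
  have "\<forall>q\<in>Qmax. \<forall>L. q \<noteq> 0 \<and> dense_left_ideal sm A L \<longrightarrow> (\<exists>x\<in>L. x * q \<noteq> 0)"
    using assms(1) unfolding is_left_max_quotient_def by (elim conjE)
  thus ?thesis using assms(2-4) by blast
qed

lemma H2:
  assumes Qm: "is_left_max_quotient sm A Qmax" and z: "z \<in> cen A" and p: "p \<in> Qmax"
  shows "z * p = p * z"
proof -
  have QS: "subalgebra sm Qmax" and AQ: "A \<subseteq> Qmax" using Qm_sub[OF Qm] Qm_A[OF Qm] by auto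
  obtain L where L: "dense_left_ideal sm A L" and Lp: "\<forall>x\<in>L. x * p \<in> A"
    using Qm_1[OF Qm p] by blast
  have zA: "z \<in> A" using z cenA by blast
  have zQ: "z \<in> Qmax" using AQ zA by blast
  have QSm: "submodule sm Qmax" using QS subalgebra_def by blast
  have zp: "z * p \<in> Qmax" "p * z \<in> Qmax" using QS zQ p unfolding subalgebra_def by blast+
  have sQ: "z * p - p * z \<in> Qmax" using sub_diff[OF phi QSm zp] .
  have "x * (z * p - p * z) = 0" if x: "x \<in> L" for x
  proof -
    have xA: "x \<in> A" using dense_sub[OF L] x by blast
    have e1: "x * z = z * x" using cenC[OF z xA] by simp
    have e2: "(x * p) * z = z * (x * p)" using cenC[OF z] Lp x by simp
    have "x * (z * p - p * z) = (x * z) * p - (x * p) * z" by (simp add: algebra_simps)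
    also have "\<dots> = (z * x) * p - z * (x * p)" by (simp only: e1 e2)
    also have "\<dots> = 0" by (simp add: mult.assoc)
    finally show ?thesis .
  qed
  hence "z * p - p * z = 0" using Qm_2[OF Qm sQ L] by blast
  thus ?thesis by simp
qed

lemma K4:
  assumes Qm: "is_left_max_quotient sm A Qmax" and QS: "subalgebra sm Q"
    and QQs: "Q \<subseteq> Qs sm A Qmax" and ess: "essential_ideal sm A J"
    and q: "q \<in> Q" and zq: "\<forall>x\<in>J. bracket q x = 0" and r: "r \<in> Q"
  shows "bracket q r = 0"
proof -
  have JI: "alg_ideal sm A J" using ess ess_ideal by blast
  have JA: "\<And>u. u \<in> J \<Longrightarrow> u \<in> A" using JI alg_ideal_def by blast
  have Jl: "\<And>b u. b \<in> A \<Longrightarrow> u \<in> J \<Longrightarrow> b * u \<in> J" using JI alg_ideal_def by blast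
  obtain K where K: "essential_ideal sm A K" and Kr: "\<forall>x\<in>K. x * r \<in> A \<and> r * x \<in> A"
    using QQs r unfolding Qs_def by blast
  have KI: "alg_ideal sm A K" using K ess_ideal by blast
  have KA: "\<And>u. u \<in> K \<Longrightarrow> u \<in> A" using KI alg_ideal_def by blast
  have Kl: "\<And>b u. b \<in> A \<Longrightarrow> u \<in> K \<Longrightarrow> b * u \<in> K" using KI alg_ideal_def by blast
  define s where "s = bracket q r"
  have sQ: "s \<in> Q" unfolding s_def bracket_def using QS q r phi
    unfolding subalgebra_def by (meson sub_diff)
  obtain M where M: "essential_ideal sm A M" and Ms: "\<forall>x\<in>M. x * s \<in> A \<and> s * x \<in> A"
    using QQs sQ unfolding Qs_def by blast
  have MI: "alg_ideal sm A M" using M ess_ideal by blast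
  have MA: "\<And>u. u \<in> M \<Longrightarrow> u \<in> A" using MI alg_ideal_def by blast
  have sQm: "s \<in> Qmax" using QQs sQ unfolding Qs_def by blast
  have st1: "s * y * x = 0" if y: "y \<in> K" and x: "x \<in> J" for y x
  proof -
    have ry: "r * y \<in> A" using Kr y by blast
    have "bracket q (r * y * x) = 0" using zq Jl[OF ry x] by blast
    moreover have "y * x \<in> J" using Jl[OF KA[OF y] x] .
    hence "bracket q (y * x) = 0" using zq by blast
    ultimately have "bracket q r * (y * x) = 0"
      using id_der[of q r "y * x"] by (simp add: mult.assoc)
    thus ?thesis unfolding s_def by (simp add: mult.assoc)
  qed
  have st2: "s * m = 0" if m: "m \<in> M" for m
  proof (rule E_right[OF K])
    show "s * m \<in> A" using Ms m by blast
    show "\<forall>j\<in>K. s * m * j = 0"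
    proof
      fix y assume y: "y \<in> K"
      show "s * m * y = 0"
      proof (rule E_right[OF ess])
        show "s * m * y \<in> A" using Ms m KA[OF y] by (simp add: A_mul)
        show "\<forall>j\<in>J. s * m * y * j = 0"
          using st1[OF Kl[OF MA[OF m] y]] by (simp add: mult.assoc)
      qed
    qed
  qed
  obtain L where L: "dense_left_ideal sm A L" and Ls: "\<forall>x\<in>L. x * s \<in> A"
    using Qm_1[OF Qm sQm] by blast
  have "x * s = 0" if x: "x \<in> L" for x
  proof (rule E_right[OF M])
    show "x * s \<in> A" using Ls x by blast
    show "\<forall>j\<in>M. x * s * j = 0" using st2 by (simp add: mult.assoc)
  qed
  hence "s = 0" using Qm_2[OF Qm sQm L] by blast
  thus ?thesis using s_def by simp
qed

end

lemma subalg_br: "phi_algebra sm \<Longrightarrow> subalgebra sm S \<Longrightarrow> x \<in> S \<Longrightarrow> y \<in> S \<Longrightarrow> bracket x y \<in> S"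
proof -
  assume p: "phi_algebra sm" and S: "subalgebra sm S" and x: "x \<in> S" and y: "y \<in> S"
  have Ss: "submodule sm S" and m: "x * y \<in> S" "y * x \<in> S" using S x y subalgebra_def by blast+
  show ?thesis unfolding bracket_def using sub_diff[OF p Ss m] .
qed

lemma span_br_sub: "phi_algebra sm \<Longrightarrow> subalgebra sm S \<Longrightarrow> commutator_space sm S \<subseteq> S"
proof -
  assume p: "phi_algebra sm" and S: "subalgebra sm S"
  have "{bracket x y |x y. x \<in> S \<and> y \<in> S} \<subseteq> S" using subalg_br[OF p S] by blast
  moreover have "submodule sm S" using S subalgebra_def by blast
  ultimately show ?thesis unfolding commutator_space_def by (rule span_least)
qed

lemma span_br_gen: "x \<in> S \<Longrightarrow> y \<in> S \<Longrightarrow> bracket x y \<in> commutator_space sm S"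
proof -
  assume "x \<in> S" "y \<in> S"
  hence "bracket x y \<in> {bracket x y |x y. x \<in> S \<and> y \<in> S}" by blast
  thus ?thesis unfolding commutator_space_def using span_gen[of _ sm] by (rule subsetD[rotated])
qed

theorem mainTheorem4:
  fixes sm :: "'r::comm_ring_1 \<Rightarrow> 'q::ring \<Rightarrow> 'q"
    and A Qmax Q :: "'q set"
  assumes "phi_algebra sm"
    and "subalgebra sm A"
    and "semiprime sm A"
    and "two_torsion_free A"
    and "is_left_max_quotient sm A Qmax"
    and "subalgebra sm Q"
    and "A \<subseteq> Q"
    and "Q \<subseteq> Qs sm A Qmax"
  shows "lie_center (commutator_space sm A)
           = commutator_space sm A \<inter> lie_center (commutator_space sm Q)
       \<and> lie_quotient_algebra_of_quotients sm
           (commutator_space sm A) (lie_center (commutator_space sm A))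
           (commutator_space sm Q) (lie_center (commutator_space sm Q))"
proof -
  note phi = assms(1) and tt = assms(4) and Qm = assms(5) and QS = assms(6)
    and AQ = assms(7) and QQs = assms(8)
  interpret sp sm A using assms(1-3) by unfold_locales
  define LA where "LA = commutator_space sm A"
  define LQ where "LQ = commutator_space sm Q"
  define ZA where "ZA = lie_center LA"
  define ZQ where "ZQ = lie_center LQ"
  have QQm: "Q \<subseteq> Qmax" using QQs unfolding Qs_def by blast
  have LAsub: "submodule sm LA" unfolding LA_def commutator_space_def by (rule span_sub)
  have LQsub: "submodule sm LQ" unfolding LQ_def commutator_space_def by (rule span_sub)
  have LAA: "LA \<subseteq> A" unfolding LA_def using span_br_sub[OF phi subA] .
  have LQQ: "LQ \<subseteq> Q" unfolding LQ_def using span_br_sub[OF phi QS] .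
  have brLA: "\<And>x y. x \<in> A \<Longrightarrow> y \<in> A \<Longrightarrow> bracket x y \<in> LA"
    unfolding LA_def by (rule span_br_gen)
  have LALQ: "LA \<subseteq> LQ"
    unfolding LA_def LQ_def commutator_space_def
  proof (rule span_least)
    show "{bracket x y |x y. x \<in> A \<and> y \<in> A} \<subseteq> phi_span sm {bracket x y |x y. x \<in> Q \<and> y \<in> Q}"
    proof -
      have "{bracket x y |x y. x \<in> A \<and> y \<in> A} \<subseteq> {bracket x y |x y. x \<in> Q \<and> y \<in> Q}"
        using AQ by blast
      thus ?thesis using span_gen by (rule subset_trans)
    qed
    show "submodule sm (phi_span sm {bracket x y |x y. x \<in> Q \<and> y \<in> Q})" by (rule span_sub)
  qed
  have ZAcen: "z \<in> cen A" if z: "z \<in> ZA" for z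
  proof (rule H1)
    show zA: "z \<in> A" using z LAA unfolding ZA_def lie_center_def by blast
    show "\<forall>x\<in>A. \<forall>y\<in>A. bracket z (bracket x y) = 0"
      using z brLA unfolding ZA_def lie_center_def by blast
  qed
  have comm: "bracket z p = 0" if z: "z \<in> cen A" and p: "p \<in> Qmax" for z p
    using H2[OF Qm z p] unfolding bracket_def by simp
  have conj1: "ZA = LA \<inter> ZQ"
  proof
    show "ZA \<subseteq> LA \<inter> ZQ"
    proof
      fix z assume z: "z \<in> ZA"
      have zLA: "z \<in> LA" using z unfolding ZA_def lie_center_def by blast
      have "\<forall>x\<in>LQ. bracket z x = 0" using comm[OF ZAcen[OF z]] LQQ QQm by blast
      thus "z \<in> LA \<inter> ZQ" using zLA LALQ unfolding ZQ_def lie_center_def by blast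
    qed
    show "LA \<inter> ZQ \<subseteq> ZA" using LALQ unfolding ZA_def ZQ_def lie_center_def by blast
  qed
  have conj2: "lie_quotient_algebra_of_quotients sm LA ZA LQ ZQ"
    unfolding lie_quotient_algebra_of_quotients_def
  proof (intro ballI impI)
    fix q assume qLQ: "q \<in> LQ" and qZ: "q \<notin> ZQ"
    have qQ: "q \<in> Q" using qLQ LQQ by blast
    have qQm: "q \<in> Qmax" using qQ QQm by blast
    obtain J where ess: "essential_ideal sm A J" and Jq: "\<forall>x\<in>J. x * q \<in> A \<and> q * x \<in> A"
      using QQs qQ unfolding Qs_def by blast
    have JI: "alg_ideal sm A J" using ess ess_ideal by blast
    have JA: "\<And>u. u \<in> J \<Longrightarrow> u \<in> A" using JI alg_ideal_def by blast
    have Jl: "\<And>b u. b \<in> A \<Longrightarrow> u \<in> J \<Longrightarrow> b * u \<in> J" using JI alg_ideal_def by blast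
    have Jr: "\<And>b u. b \<in> A \<Longrightarrow> u \<in> J \<Longrightarrow> u * b \<in> J" using JI alg_ideal_def by blast
    have Jsub: "submodule sm J" using JI alg_ideal_def by blast
    have JbrA: "\<And>b u. b \<in> A \<Longrightarrow> u \<in> J \<Longrightarrow> bracket b u \<in> J"
      unfolding bracket_def using Jl Jr sub_diff[OF phi Jsub] by blast
    have brqA: "bracket y q \<in> A" if y: "y \<in> J" for y
      unfolding bracket_def using Jq y by (simp add: A_diff)
    define G where "G = {bracket x y |x y. x \<in> J \<and> y \<in> J} \<union> ZA"
    define I where "I = phi_span sm G"
    have Isub: "submodule sm I" unfolding I_def by (rule span_sub)
    have GI: "G \<subseteq> I" unfolding I_def by (rule span_gen)
    have ZAI: "ZA \<subseteq> I" using GI G_def by blast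
    have ZALA: "ZA \<subseteq> LA" unfolding ZA_def lie_center_def by blast
    have ILA: "I \<subseteq> LA" unfolding I_def
    proof (rule span_least[OF _ LAsub])
      show "G \<subseteq> LA" unfolding G_def using ZALA brLA[OF JA JA] by blast
    qed
    have Iid: "\<forall>b\<in>A. bracket b x \<in> I" if x: "x \<in> I" for x
      using x[unfolded I_def]
    proof (rule span_induct)
      show "\<forall>b\<in>A. bracket b 0 \<in> I" using sub_0[OF Isub] by simp
    next
      fix g assume g: "g \<in> G"
      show "\<forall>b\<in>A. bracket b g \<in> I"
      proof
        fix b assume b: "b \<in> A"
        show "bracket b g \<in> I"
        proof (cases "g \<in> ZA")
          case True
          have "bracket b g = 0" using cenC[OF ZAcen[OF True] b] unfolding bracket_def by simp
          thus ?thesis using sub_0[OF Isub] by simp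
        next
          case False
          then obtain x y where x: "x \<in> J" and y: "y \<in> J" and g: "g = bracket x y"
            using g G_def by blast
          have "bracket (bracket b x) y \<in> I" using GI G_def JbrA[OF b x] y by blast
          moreover have "bracket x (bracket b y) \<in> I" using GI G_def JbrA[OF b y] x by blast
          ultimately show ?thesis unfolding g id_dl[of b x y] using sub_add[OF Isub] by blast
        qed
      qed
    next
      fix u v assume "\<forall>b\<in>A. bracket b u \<in> I" "\<forall>b\<in>A. bracket b v \<in> I"
      thus "\<forall>b\<in>A. bracket b (u + v) \<in> I" using sub_add[OF Isub] by (simp add: bracket_add_r)
    next
      fix c u assume "\<forall>b\<in>A. bracket b u \<in> I"
      thus "\<forall>b\<in>A. bracket b (sm c u) \<in> I" using sub_sm[OF Isub] by (simp add: bracket_sm_r[OF phi])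
    qed
    have Ibr: "bracket x q \<in> LA" if x: "x \<in> I" for x
      using x[unfolded I_def]
    proof (rule span_induct)
      show "bracket 0 q \<in> LA" using sub_0[OF LAsub] by simp
    next
      fix g assume g: "g \<in> G"
      show "bracket g q \<in> LA"
      proof (cases "g \<in> ZA")
        case True
        have "bracket g q = 0" using comm[OF ZAcen[OF True] qQm] .
        thus ?thesis using sub_0[OF LAsub] by simp
      next
        case False
        then obtain x y where x: "x \<in> J" and y: "y \<in> J" and g: "g = bracket x y"
          using g G_def by blast
        have "bracket x (bracket y q) \<in> LA" using brLA JA[OF x] brqA[OF y] by blast
        moreover have "bracket y (bracket x q) \<in> LA" using brLA JA[OF y] brqA[OF x] by blast
        ultimately show ?thesis unfolding g id_jac using sub_diff[OF phi LAsub] by blast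
      qed
    next
      fix u v assume "bracket u q \<in> LA" "bracket v q \<in> LA"
      thus "bracket (u + v) q \<in> LA" using sub_add[OF LAsub] by (simp add: bracket_add_l)
    next
      fix c u assume "bracket u q \<in> LA"
      thus "bracket (sm c u) q \<in> LA" using sub_sm[OF LAsub] by (simp add: bracket_sm_l[OF phi])
    qed
    have ZQ0: "0 \<in> ZQ" unfolding ZQ_def lie_center_def using sub_0[OF LQsub] by simp
    have ann: "a \<in> ZA" if aLA: "a \<in> LA" and ha: "\<forall>x\<in>I. bracket a x \<in> ZA" for a
    proof -
      have aA: "a \<in> A" using aLA LAA by blast
      have aJ: "\<forall>x\<in>J. a * x \<in> A \<and> x * a \<in> A" using aA JA by (simp add: A_mul)
      have h1: "\<forall>x\<in>J. \<forall>y\<in>J. bracket a (bracket x y) \<in> cen A"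
        using ha GI G_def ZAcen by blast
      have h2: "\<forall>x\<in>J. \<forall>y\<in>J. bracket a (bracket x y) = 0"
        using K1[OF ess tt aJ h1] by blast
      have h3: "\<forall>x\<in>J. bracket a x = 0" using K2[OF ess aJ h2] by blast
      have ac: "a \<in> cen A" using K3[OF ess aA h3] .
      have "\<forall>x\<in>LA. bracket a x = 0" using cenC[OF ac] LAA unfolding bracket_def by auto
      thus ?thesis using aLA unfolding ZA_def lie_center_def by blast
    qed
    have nz: "\<exists>x\<in>I. bracket x q \<notin> ZQ"
    proof (rule ccontr)
      assume "\<not> (\<exists>x\<in>I. bracket x q \<notin> ZQ)"
      hence allZ: "\<forall>x\<in>I. bracket x q \<in> ZQ" by blast
      have h1: "\<forall>x\<in>J. \<forall>y\<in>J. bracket q (bracket x y) \<in> cen A"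
      proof (intro ballI)
        fix x y assume x: "x \<in> J" and y: "y \<in> J"
        have gI: "bracket x y \<in> I" using GI G_def x y by blast
        have "bracket (bracket x y) q \<in> ZA" using conj1 Ibr[OF gI] allZ gI by blast
        hence "- bracket (bracket x y) q \<in> cen A" using cen_neg ZAcen by blast
        thus "bracket q (bracket x y) \<in> cen A" using bracket_anti by metis
      qed
      have qJ: "\<forall>x\<in>J. q * x \<in> A \<and> x * q \<in> A" using Jq by blast
      have h2: "\<forall>x\<in>J. \<forall>y\<in>J. bracket q (bracket x y) = 0"
        using K1[OF ess tt qJ h1] by blast
      have h3: "\<forall>x\<in>J. bracket q x = 0" using K2[OF ess qJ h2] by blast
      have "\<forall>r\<in>Q. bracket q r = 0" using K4[OF Qm QS QQs ess qQ h3] by blast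
      hence "q \<in> ZQ" using qLQ LQQ unfolding ZQ_def lie_center_def by blast
      thus False using qZ by blast
    qed
    show "\<exists>I. submodule sm I \<and> ZA \<subseteq> I \<and> I \<subseteq> LA \<and>
             (\<forall>a\<in>LA. \<forall>x\<in>I. bracket a x \<in> I) \<and>
             (\<forall>a\<in>LA. (\<forall>x\<in>I. bracket a x \<in> ZA) \<longrightarrow> a \<in> ZA) \<and>
             (\<forall>x\<in>I. \<exists>a\<in>LA. \<exists>z\<in>ZQ. bracket x q = a + z) \<and>
             (\<exists>x\<in>I. bracket x q \<notin> ZQ)"
    proof (intro exI conjI)
      show "submodule sm I" by (rule Isub)
      show "ZA \<subseteq> I" by (rule ZAI)
      show "I \<subseteq> LA" by (rule ILA)
      show "\<forall>a\<in>LA. \<forall>x\<in>I. bracket a x \<in> I" using Iid LAA by blast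
      show "\<forall>a\<in>LA. (\<forall>x\<in>I. bracket a x \<in> ZA) \<longrightarrow> a \<in> ZA" using ann by blast
      show "\<forall>x\<in>I. \<exists>a\<in>LA. \<exists>z\<in>ZQ. bracket x q = a + z"
      proof
        fix x assume "x \<in> I"
        hence "bracket x q \<in> LA" by (rule Ibr)
        thus "\<exists>a\<in>LA. \<exists>z\<in>ZQ. bracket x q = a + z" using ZQ0 by (intro bexI[of _ "bracket x q"] bexI[of _ 0]) auto
      qed
      show "\<exists>x\<in>I. bracket x q \<notin> ZQ" by (rule nz)
    qed
  qed
  show ?thesis using conj1 conj2 unfolding LA_def LQ_def ZA_def ZQ_def by blast
qed

end
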